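(* Fix an integer $\Delta\ge3$. For $k\ge1$ let $T_k$ be the $(\Delta-1)$-ary tree of depth $k$, and let $\mathcal{T}=\{T_k: k\ge1\}$. Then for every real $d>1$, $\mu_{\log}(\mathcal{T})\le d$.
   Context: The $(\Delta-1)$-ary tree of depth $k$ is the rooted tree in which every vertex at depth less than $k$ has exactly $\Delta-1$ children and all leaves are at depth $k$. A self-avoiding walk (SAW) of length $i$ from $v$ is a walk $v=v_0,\dots,v_i$ with all vertices distinct; $\mathcal{N}_{\le \ell}(G,v)$ is the number of SAWs of length between $1$ and $\ell$ starting at $v$. For a family $\mathcal{H}$ of finite graphs, "$\mu_{\log}(\mathcal{H})\le d$" (log-depth connective constant at most $d$) means: there exist constants $a,c$ such that for every $G=(V,E)\in\mathcal{H}$, every $v\in V$, and every $\ell\ge a\log|V|$, one has $\mathcal{N}_{\le\ell}(G,v)\le c\,d^{\ell}$. *)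

theory Defs
  imports Complex_Main
begin

text \<open>A finite graph is given by a vertex set V and a symmetric adjacency relation E
  (only edges between vertices of V matter).\<close>

definition saws :: "'a set \<Rightarrow> ('a \<Rightarrow> 'a \<Rightarrow> bool) \<Rightarrow> 'a \<Rightarrow> nat \<Rightarrow> 'a list set" where
  "saws V E v i = {p. length p = Suc i \<and> hd p = v \<and> distinct p \<and> set p \<subseteq> V \<and>
                      (\<forall>j<i. E (p ! j) (p ! Suc j))}"

definition N_le :: "'a set \<Rightarrow> ('a \<Rightarrow> 'a \<Rightarrow> bool) \<Rightarrow> 'a \<Rightarrow> nat \<Rightarrow> nat" where
  "N_le V E v l = card (\<Union>i\<in>{1..l}. saws V E v i)"

definition mu_log_le :: "('a set \<times> ('a \<Rightarrow> 'a \<Rightarrow> bool)) set \<Rightarrow> real \<Rightarrow> bool" where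
  "mu_log_le H d \<longleftrightarrow> (\<exists>a c :: real. \<forall>(V, E) \<in> H. \<forall>v\<in>V. \<forall>l::nat.
       real l \<ge> a * ln (real (card V)) \<longrightarrow> real (N_le V E v l) \<le> c * d ^ l)"

text \<open>The (Delta-1)-ary tree of depth k: vertices are words over {0..<Delta-1} of length
  at most k (the root is the empty word); children of u are u @ [i].\<close>
definition tree_verts :: "nat \<Rightarrow> nat \<Rightarrow> nat list set" where
  "tree_verts \<Delta> k = {xs. length xs \<le> k \<and> set xs \<subseteq> {0..<\<Delta> - 1}}"

definition tree_adj :: "nat list \<Rightarrow> nat list \<Rightarrow> bool" where
  "tree_adj u v \<longleftrightarrow> (\<exists>i. v = u @ [i]) \<or> (\<exists>i. u = v @ [i])"

definition tree_family :: "nat \<Rightarrow> (nat list set \<times> (nat list \<Rightarrow> nat list \<Rightarrow> bool)) set" where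
  "tree_family \<Delta> = {(tree_verts \<Delta> k, tree_adj) | k. k \<ge> 1}"

end

theory Submission
  imports Defs
begin

lemma saws_props:
  assumes "p \<in> saws V tree_adj v i"
  shows "length p = Suc i" "hd p = v" "distinct p" "set p \<subseteq> V"
        "\<And>j. j < i \<Longrightarrow> tree_adj (p ! j) (p ! Suc j)"
  using assms unfolding saws_def by auto

lemma down_persist:
  assumes p: "p \<in> saws V tree_adj v i" and j: "Suc j < i"
    and dn: "\<exists>x. p ! Suc j = p ! j @ [x]"
  shows "\<exists>x. p ! Suc (Suc j) = p ! Suc j @ [x]"
proof (rule ccontr)
  assume nd: "\<not> ?thesis"
  from saws_props(5)[OF p j] nd obtain y where y: "p ! Suc j = p ! Suc (Suc j) @ [y]"
    unfolding tree_adj_def by auto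
  from dn obtain x where x: "p ! Suc j = p ! j @ [x]" by auto
  from x y have "p ! Suc (Suc j) = p ! j"
    by (metis butlast_snoc)
  moreover have "distinct p" "length p = Suc i" using saws_props[OF p] by auto
  ultimately show False using j by (simp add: nth_eq_iff_index_eq)
qed

lemma up_run:
  assumes "\<And>j. j < n \<Longrightarrow> length (p ! Suc j) + 1 = length (p ! j)"
  shows "length (p ! n) + n = length (p ! 0)"
  using assms
proof (induction n)
  case 0 then show ?case by simp
next
  case (Suc n)
  have "length (p ! n) + n = length (p ! 0)" using Suc by auto
  moreover have "length (p ! Suc n) + 1 = length (p ! n)" using Suc.prems by auto
  ultimately show ?case by simp
qed

lemma down_run:
  assumes "\<And>j. m \<le> j \<Longrightarrow> j < m + n \<Longrightarrow> length (p ! Suc j) = length (p ! j) + 1"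
  shows "length (p ! (m + n)) = length (p ! m) + n"
  using assms
proof (induction n)
  case 0 then show ?case by simp
next
  case (Suc n)
  have "length (p ! (m + n)) = length (p ! m) + n" using Suc by auto
  moreover have "length (p ! Suc (m + n)) = length (p ! (m+n)) + 1" using Suc.prems by auto
  ultimately show ?case by simp
qed

lemma saw_len:
  assumes p: "p \<in> saws V tree_adj v i" and V: "V \<subseteq> tree_verts D k"
  shows "i \<le> 2 * k"
proof -
  note P = saws_props[OF p]
  have lenk: "length (p ! j) \<le> k" if "j \<le> i" for j
  proof -
    have "p ! j \<in> set p" using P(1) that by auto
    then have "p ! j \<in> tree_verts D k" using P(4) V by auto
    then show ?thesis unfolding tree_verts_def by auto
  qed
  have stepu: "length (p ! Suc j) + 1 = length (p ! j)"
    if "j < i" "\<not> (\<exists>x. p ! Suc j = p ! j @ [x])" for j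
  proof -
    from P(5)[OF that(1)] that(2) obtain y where "p ! j = p ! Suc j @ [y]"
      unfolding tree_adj_def by auto
    then show ?thesis by simp
  qed
  have stepd: "length (p ! Suc j) = length (p ! j) + 1"
    if "\<exists>x. p ! Suc j = p ! j @ [x]" for j
    using that by auto
  show ?thesis
  proof (cases "\<exists>j<i. \<exists>x. p ! Suc j = p ! j @ [x]")
    case False
    then have "length (p ! i) + i = length (p ! 0)"
      by (intro up_run stepu) auto
    then show ?thesis using lenk[of 0] by simp
  next
    case True
    define m where "m = (LEAST j. j < i \<and> (\<exists>x. p ! Suc j = p ! j @ [x]))"
    have m: "m < i" "\<exists>x. p ! Suc m = p ! m @ [x]"
      using LeastI_ex[OF True[simplified Bex_def[symmetric]]] unfolding m_def
      by (metis (no_types, lifting) LeastI_ex True)+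
    have before: "\<not> (\<exists>x. p ! Suc j = p ! j @ [x])" if "j < m" for j
      using not_less_Least[of j "\<lambda>j. j < i \<and> (\<exists>x. p ! Suc j = p ! j @ [x])"] that m(1)
      unfolding m_def by auto
    have "length (p ! m) + m = length (p ! 0)"
      by (intro up_run stepu) (use before m(1) in auto)
    then have mk: "m \<le> k" using lenk[of 0] by simp
    have persist: "m + n < i \<Longrightarrow> \<exists>x. p ! Suc (m + n) = p ! (m + n) @ [x]" for n
    proof (induction n)
      case 0 then show ?case using m by simp
    next
      case (Suc n)
      then show ?case using down_persist[OF p, of "m + n"] by simp
    qed
    have "length (p ! (m + (i - m))) = length (p ! m) + (i - m)"
    proof (rule down_run)
      fix j assume "m \<le> j" "j < m + (i - m)"
      then show "length (p ! Suc j) = length (p ! j) + 1"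
        using persist[of "j - m"] stepd by simp
    qed
    then have "i - m \<le> k" using lenk[of i] m(1) by simp
    then show ?thesis using mk by simp
  qed
qed


definition enc :: "nat list list \<Rightarrow> nat option list" where
  "enc p = map (\<lambda>j. if (\<exists>x. p ! Suc j = p ! j @ [x]) then Some (last (p ! Suc j)) else None)
     [0..<length p - 1]"

lemma enc_inj:
  "inj_on enc (saws V tree_adj v i)"
proof (rule inj_onI)
  fix p q assume p: "p \<in> saws V tree_adj v i" and q: "q \<in> saws V tree_adj v i"
    and e: "enc p = enc q"
  note P = saws_props[OF p] and Q = saws_props[OF q]
  have ej: "enc p ! j = enc q ! j" for j using e by simp
  have eq: "j \<le> i \<Longrightarrow> p ! j = q ! j" for j
  proof (induction j)
    case 0
    then show ?case using P(1,2) Q(1,2) by (metis hd_conv_nth list.size(3) nat.distinct(1))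
  next
    case (Suc j)
    then have ji: "j < i" and IH: "p ! j = q ! j" by auto
    have encp: "enc p ! j = (if (\<exists>x. p ! Suc j = p ! j @ [x]) then Some (last (p ! Suc j)) else None)"
      using ji P(1) unfolding enc_def by simp
    have encq: "enc q ! j = (if (\<exists>x. q ! Suc j = q ! j @ [x]) then Some (last (q ! Suc j)) else None)"
      using ji Q(1) unfolding enc_def by simp
    show ?case
    proof (cases "\<exists>x. p ! Suc j = p ! j @ [x]")
      case True
      then obtain x where x: "p ! Suc j = p ! j @ [x]" by auto
      then have "enc q ! j = Some x" using encp ej[of j] by simp
      then obtain y where y: "q ! Suc j = q ! j @ [y]" and "last (q ! Suc j) = x"
        using encq by (auto split: if_splits)
      then have "y = x" by simp
      then show ?thesis using x y IH by simp
    next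
      case False
      then have "enc q ! j = None" using encp ej[of j] by simp
      then have nq: "\<not> (\<exists>x. q ! Suc j = q ! j @ [x])" using encq by (auto split: if_splits)
      from P(5)[OF ji] False obtain a where a: "p ! j = p ! Suc j @ [a]"
        unfolding tree_adj_def by auto
      from Q(5)[OF ji] nq obtain b where b: "q ! j = q ! Suc j @ [b]"
        unfolding tree_adj_def by auto
      from a b IH show ?thesis by (metis butlast_snoc)
    qed
  qed
  show "p = q"
    by (rule nth_equalityI) (use P(1) Q(1) eq in auto)
qed

lemma enc_range:
  assumes p: "p \<in> saws V tree_adj v i" and V: "V \<subseteq> tree_verts D k"
  shows "enc p \<in> {xs. set xs \<subseteq> insert None (Some ` {0..<D - 1}) \<and> length xs = i}"
proof -
  note P = saws_props[OF p]
  have "set (enc p) \<subseteq> insert None (Some ` {0..<D - 1})"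
  proof
    fix z assume "z \<in> set (enc p)"
    then obtain j where j: "j < i" and z: "z = (if (\<exists>x. p ! Suc j = p ! j @ [x]) then Some (last (p ! Suc j)) else None)"
      using P(1) unfolding enc_def by auto
    show "z \<in> insert None (Some ` {0..<D - 1})"
    proof (cases "\<exists>x. p ! Suc j = p ! j @ [x]")
      case True
      then obtain x where x: "p ! Suc j = p ! j @ [x]" by auto
      have "p ! Suc j \<in> set p" using P(1) j by auto
      then have "p ! Suc j \<in> tree_verts D k" using P(4) V by auto
      then have "x \<in> {0..<D - 1}" using x unfolding tree_verts_def by auto
      then show ?thesis using z x True by simp
    next
      case False then show ?thesis using z by simp
    qed
  qed
  moreover have "length (enc p) = i" using P(1) unfolding enc_def by simp
  ultimately show ?thesis by simp
qed

lemma card_saws: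
  assumes V: "V \<subseteq> tree_verts D k" and D: "D \<ge> 1"
  shows "card (saws V tree_adj v i) \<le> D ^ i"
proof -
  let ?A = "insert None (Some ` {0..<D - 1})"
  have fA: "finite ?A" by simp
  have cA: "card ?A = D" using D by (simp add: card_image)
  have "card (saws V tree_adj v i) \<le> card {xs. set xs \<subseteq> ?A \<and> length xs = i}"
    by (rule card_inj_on_le[OF enc_inj]) (use enc_range[OF _ V] finite_lists_length_eq[OF fA] in auto)
  also have "\<dots> = D ^ i" using card_lists_length_eq[OF fA] cA by simp
  finally show ?thesis .
qed


lemma N_le_bound:
  assumes D: "D \<ge> 3"
  shows "N_le (tree_verts D k) tree_adj v l \<le> D ^ (4 * k)"
proof -
  let ?V = "tree_verts D k"
  let ?S = "saws ?V tree_adj v"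
  have fV: "finite ?V"
  proof -
    have "?V = {xs. set xs \<subseteq> {0..<D-1} \<and> length xs \<le> k}" unfolding tree_verts_def by auto
    then show ?thesis using finite_lists_length_le[of "{0..<D-1}" k] by simp
  qed
  have fS: "finite (?S i)" for i
  proof -
    have "?S i \<subseteq> {xs. set xs \<subseteq> ?V \<and> length xs = Suc i}" unfolding saws_def by auto
    then show ?thesis using finite_lists_length_eq[OF fV] finite_subset by blast
  qed
  have sub: "(\<Union>i\<in>{1..l}. ?S i) \<subseteq> (\<Union>i\<in>{1..2*k}. ?S i)"
  proof
    fix p assume "p \<in> (\<Union>i\<in>{1..l}. ?S i)"
    then obtain i where "i \<in> {1..l}" "p \<in> ?S i" by auto
    moreover then have "i \<le> 2 * k" using saw_len[of p ?V v i D k] by auto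
    ultimately show "p \<in> (\<Union>i\<in>{1..2*k}. ?S i)" by auto
  qed
  have "N_le ?V tree_adj v l \<le> card (\<Union>i\<in>{1..2*k}. ?S i)"
    unfolding N_le_def by (rule card_mono[OF _ sub]) (use fS in auto)
  also have "\<dots> \<le> (\<Sum>i\<in>{1..2*k}. card (?S i))" by (rule card_UN_le) simp
  also have "\<dots> \<le> (\<Sum>i\<in>{1..2*k}. D ^ (2 * k))"
  proof (rule sum_mono)
    fix i assume "i \<in> {1..2*k}"
    then have "card (?S i) \<le> D ^ i" "D ^ i \<le> D ^ (2 * k)"
      using card_saws[of ?V D k v i] D by (auto intro: power_increasing)
    then show "card (?S i) \<le> D ^ (2 * k)" by linarith
  qed
  also have "\<dots> = 2 * k * D ^ (2 * k)" by simp
  also have "\<dots> \<le> D ^ (2 * k) * D ^ (2 * k)"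
  proof -
    have "2 * k < 2 ^ (2 * k)" by (rule less_exp)
    also have "(2::nat) ^ (2 * k) \<le> D ^ (2 * k)" using D by (intro power_mono) auto
    finally show ?thesis by simp
  qed
  also have "\<dots> = D ^ (4 * k)" by (simp flip: power_add)
  finally show ?thesis .
qed

lemma card_verts:
  assumes D: "D \<ge> 3"
  shows "2 ^ k \<le> card (tree_verts D k)" "finite (tree_verts D k)"
proof -
  have eq: "tree_verts D k = {xs. set xs \<subseteq> {0..<D-1} \<and> length xs \<le> k}" unfolding tree_verts_def by auto
  show fV: "finite (tree_verts D k)" unfolding eq using finite_lists_length_le[of "{0..<D-1}" k] by simp
  have "(2::nat) ^ k \<le> (D - 1) ^ k" using D by (intro power_mono) auto
  also have "\<dots> = card {xs. set xs \<subseteq> {0..<D-1} \<and> length xs = k}"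
    by (simp add: card_lists_length_eq)
  also have "\<dots> \<le> card (tree_verts D k)"
    by (rule card_mono[OF fV]) (auto simp: eq)
  finally show "2 ^ k \<le> card (tree_verts D k)" .
qed

theorem lemma3p1:
  fixes \<Delta> :: nat and d :: real
  assumes "\<Delta> \<ge> 3" and "d > 1"
  shows "mu_log_le (tree_family \<Delta>) d"
  unfolding mu_log_le_def
proof (intro exI ballI allI impI, clarify)
  let ?a = "4 * ln (real \<Delta>) / (ln 2 * ln d)"
  fix V E v l
  assume VE: "(V, E) \<in> tree_family \<Delta>" and v: "v \<in> V"
    and l: "?a * ln (real (card V)) \<le> real l"
  from VE obtain k where k: "V = tree_verts \<Delta> k" "E = tree_adj" "k \<ge> 1"
    unfolding tree_family_def by auto
  have N: "N_le V E v l \<le> \<Delta> ^ (4 * k)" using N_le_bound[OF assms(1)] k by simp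
  have cV: "real (2 ^ k) \<le> real (card V)" using card_verts[OF assms(1)] k by simp
  have lnd: "ln d > 0" using assms(2) by simp
  have lnD: "ln (real \<Delta>) > 0" using assms(1) by simp
  have ln2: "ln (2::real) > 0" by simp
  have "real k * ln 2 = ln (real (2 ^ k))" by (simp add: ln_realpow)
  also have "\<dots> \<le> ln (real (card V))" using cV by (intro ln_mono) auto
  finally have lk: "real k * ln 2 \<le> ln (real (card V))" .
  have apos: "?a \<ge> 0" using lnd lnD ln2 by simp
  have "?a * (real k * ln 2) \<le> ?a * ln (real (card V))"
    by (intro mult_left_mono lk apos)
  also have "?a * (real k * ln 2) = 4 * real k * ln (real \<Delta>) / ln d"
    using ln2 by (simp add: field_simps)
  finally have "4 * real k * ln (real \<Delta>) / ln d \<le> real l" using l by linarith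
  then have key: "4 * real k * ln (real \<Delta>) \<le> real l * ln d"
    using lnd by (simp add: divide_le_eq)
  have "real (\<Delta> ^ (4 * k)) = exp (4 * real k * ln (real \<Delta>))"
  proof -
    have "exp (4 * real k * ln (real \<Delta>)) = exp (real (4 * k) * ln (real \<Delta>))" by simp
    also have "\<dots> = exp (ln (real \<Delta>)) ^ (4 * k)" by (rule exp_of_nat_mult)
    also have "\<dots> = real \<Delta> ^ (4 * k)" using assms(1) by simp
    finally show ?thesis by simp
  qed
  also have "\<dots> \<le> exp (real l * ln d)" using key by simp
  also have "\<dots> = d ^ l" using assms(2) by (simp add: exp_of_nat_mult)
  finally have "real (\<Delta> ^ (4 * k)) \<le> d ^ l" .
  then show "real (N_le V E v l) \<le> 1 * d ^ l" using N
    by (metis mult_1 of_nat_le_iff order_trans)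
qed

end
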